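(* Let $P$ be a complex polynomial of degree $m\ge1$ and let $B\in C^\infty(\mathbb{R},\mathbb{C})$ be constant outside a compact set and such that $\operatorname{Range}(B)\cap P(\{z\in\mathbb{C}:P'(z)=0\})=\emptyset$. Then there exists $g\in C^\infty(\mathbb{R},\mathbb{C})$ with $P\circ g=B$. *)

theory Defs
  imports "HOL-Analysis.Analysis" "HOL-Computational_Algebra.Polynomial"
begin

definition smooth_real_complex :: "(real \<Rightarrow> complex) \<Rightarrow> bool" where
  "smooth_real_complex f \<longleftrightarrow>
     (\<exists>D :: nat \<Rightarrow> real \<Rightarrow> complex. D 0 = f \<and>
        (\<forall>n t. (D n has_vector_derivative D (Suc n) t) (at t)))"

end

theory Submission
  imports Defs "HOL-Complex_Analysis.Complex_Analysis" "HOL-Computational_Algebra.Fundamental_Theorem_Algebra"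
begin


definition vd :: "(real \<Rightarrow> complex) \<Rightarrow> real \<Rightarrow> complex" where
  "vd f = (\<lambda>t. vector_derivative f (at t))"

definition Dg :: "nat \<Rightarrow> (real \<Rightarrow> complex) \<Rightarrow> real \<Rightarrow> complex" where
  "Dg n f = (vd ^^ n) f"

definition smk :: "nat \<Rightarrow> real set \<Rightarrow> (real \<Rightarrow> complex) \<Rightarrow> bool" where
  "smk k N f \<longleftrightarrow> (\<forall>j\<le>k. \<forall>t\<in>N. Dg j f differentiable (at t))"

lemma Dg_0[simp]: "Dg 0 f = f" by (simp add: Dg_def)
lemma Dg_Suc: "Dg (Suc n) f = vd (Dg n f)" by (simp add: Dg_def)
lemma Dg_Suc': "Dg (Suc n) f = Dg n (vd f)" unfolding Dg_def funpow_Suc_right by simp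

lemma vd_local:
  assumes "open N" "\<forall>t\<in>N. f t = g t" "t \<in> N"
  shows "vd f t = vd g t"
proof -
  have "(f has_vector_derivative D) (at t) \<longleftrightarrow> (g has_vector_derivative D) (at t)" for D
  proof
    assume "(f has_vector_derivative D) (at t)"
    then show "(g has_vector_derivative D) (at t)"
      by (rule has_vector_derivative_transform_within_open[OF _ assms(1,3)]) (use assms(2) in auto)
  next
    assume "(g has_vector_derivative D) (at t)"
    then show "(f has_vector_derivative D) (at t)"
      by (rule has_vector_derivative_transform_within_open[OF _ assms(1,3)]) (use assms(2) in auto)
  qed
  then show ?thesis unfolding vd_def vector_derivative_def by simp
qed

lemma Dg_local:
  assumes "open N" "\<forall>t\<in>N. f t = g t"
  shows "\<forall>t\<in>N. Dg j f t = Dg j g t"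
proof (induction j)
  case 0 then show ?case using assms by simp
next
  case (Suc j)
  show ?case unfolding Dg_Suc using vd_local[OF assms(1) Suc.IH] by blast
qed

lemma diff_local:
  fixes f g :: "real \<Rightarrow> complex"
  assumes "open N" "\<forall>t\<in>N. f t = g t" "t \<in> N" "f differentiable (at t)"
  shows "g differentiable (at t)"
proof -
  have "(f has_vector_derivative vector_derivative f (at t)) (at t)"
    using assms(4) vector_derivative_works by blast
  then have "(g has_vector_derivative vector_derivative f (at t)) (at t)"
    by (rule has_vector_derivative_transform_within_open[OF _ assms(1,3)]) (use assms(2) in auto)
  then show ?thesis by (rule differentiableI_vector)
qed

lemma smk_local':
  assumes "open N" "smk k N f" "\<forall>t\<in>N. f t = g t"
  shows "smk k N g"
  unfolding smk_def
proof (intro allI impI ballI)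
  fix j t assume jt: "j \<le> k" "t \<in> N"
  then have "Dg j f differentiable (at t)" using assms(2) unfolding smk_def by blast
  then show "Dg j g differentiable (at t)"
    by (rule diff_local[OF assms(1) Dg_local[OF assms(1,3)] jt(2)])
qed

lemma smk_local:
  assumes "open N" "\<And>t. t \<in> N \<Longrightarrow> f t = g t" "smk k N f"
  shows "smk k N g"
  using smk_local'[OF assms(1,3)] assms(2) by simp

lemma smk_Suc_D:
  assumes "smk (Suc k) N f"
  shows "smk k N (vd f)" "smk k N f" "\<And>t. t \<in> N \<Longrightarrow> f differentiable (at t)"
  using assms unfolding smk_def
  by (auto simp flip: Dg_Suc')

lemma smk_SucI:
  assumes "\<And>t. t \<in> N \<Longrightarrow> f differentiable (at t)" "smk k N (vd f)"
  shows "smk (Suc k) N f"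
  unfolding smk_def
proof (intro allI impI ballI)
  fix j t assume "j \<le> Suc k" "t \<in> N"
  show "Dg j f differentiable (at t)"
  proof (cases j)
    case 0 then show ?thesis using assms \<open>t\<in>N\<close> by simp
  next
    case (Suc i)
    then show ?thesis using assms(2) \<open>j \<le> Suc k\<close> \<open>t\<in>N\<close> unfolding smk_def by (auto simp: Dg_Suc')
  qed
qed

lemma vd_at: "(f has_vector_derivative D) (at t) \<Longrightarrow> vd f t = D"
  unfolding vd_def by (rule vector_derivative_at)

lemma hvd: "f differentiable (at t) \<Longrightarrow> (f has_vector_derivative vd f t) (at t)"
  unfolding vd_def using vector_derivative_works by blast

lemma smk_add:
  assumes "open N" "smk k N u" "smk k N v"
  shows "smk k N (\<lambda>t. u t + v t)"
  using assms(2,3)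
proof (induction k arbitrary: u v)
  case 0
  then show ?case unfolding smk_def by (auto intro: differentiable_add)
next
  case (Suc k)
  have du: "\<And>t. t \<in> N \<Longrightarrow> u differentiable (at t)" and dv: "\<And>t. t \<in> N \<Longrightarrow> v differentiable (at t)"
    using smk_Suc_D Suc.prems by blast+
  have eq: "\<And>t. t \<in> N \<Longrightarrow> (\<lambda>t. vd u t + vd v t) t = vd (\<lambda>t. u t + v t) t"
    using du dv by (intro vd_at[symmetric] has_vector_derivative_add hvd) auto
  show ?case
  proof (rule smk_SucI)
    show "\<And>t. t \<in> N \<Longrightarrow> (\<lambda>t. u t + v t) differentiable (at t)"
      using du dv by (auto intro: differentiable_add)
    show "smk k N (vd (\<lambda>t. u t + v t))"
      by (rule smk_local[OF assms(1) eq Suc.IH[OF smk_Suc_D(1)[OF Suc.prems(1)] smk_Suc_D(1)[OF Suc.prems(2)]]])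
  qed
qed

lemma smk_mult:
  assumes "open N" "smk k N u" "smk k N v"
  shows "smk k N (\<lambda>t. u t * v t)"
  using assms(2,3)
proof (induction k arbitrary: u v)
  case 0
  then show ?case unfolding smk_def by (auto intro: differentiable_mult)
next
  case (Suc k)
  have du: "\<And>t. t \<in> N \<Longrightarrow> u differentiable (at t)" and dv: "\<And>t. t \<in> N \<Longrightarrow> v differentiable (at t)"
    using smk_Suc_D Suc.prems by blast+
  have eq: "\<And>t. t \<in> N \<Longrightarrow> u t * vd v t + vd u t * v t = vd (\<lambda>t. u t * v t) t"
    using du dv by (intro vd_at[symmetric] has_vector_derivative_mult hvd) auto
  show ?case
  proof (rule smk_SucI)
    show "\<And>t. t \<in> N \<Longrightarrow> (\<lambda>t. u t * v t) differentiable (at t)"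
      using du dv by (auto intro: differentiable_mult)
    have sm: "smk k N (\<lambda>t. u t * vd v t + vd u t * v t)"
      by (rule smk_add[OF assms(1) Suc.IH[OF smk_Suc_D(2)[OF Suc.prems(1)] smk_Suc_D(1)[OF Suc.prems(2)]]
                                   Suc.IH[OF smk_Suc_D(1)[OF Suc.prems(1)] smk_Suc_D(2)[OF Suc.prems(2)]]])
    show "smk k N (vd (\<lambda>t. u t * v t))"
      by (rule smk_local'[OF assms(1) sm]) (use eq in auto)
  qed
qed

lemma smk_comp:
  assumes "open N" "open A" "h holomorphic_on A" "f ` N \<subseteq> A" "smk k N f"
  shows "smk k N (\<lambda>t. h (f t))"
  using assms(3,5)
proof (induction k arbitrary: h)
  case 0
  have "(\<lambda>t. h (f t)) differentiable (at t)" if "t \<in> N" for t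
  proof -
    have "f differentiable (at t)" using 0 that unfolding smk_def by auto
    then have "((h \<circ> f) has_vector_derivative (vd f t * deriv h (f t))) (at t)"
      using that assms by (intro field_vector_diff_chain_at hvd holomorphic_derivI[OF 0(1)]) auto
    then show ?thesis unfolding o_def using differentiableI_vector by blast
  qed
  then show ?case unfolding smk_def by auto
next
  case (Suc k)
  have df: "\<And>t. t \<in> N \<Longrightarrow> f differentiable (at t)" using smk_Suc_D Suc.prems by blast
  have hd: "((\<lambda>t. h (f t)) has_vector_derivative (vd f t * deriv h (f t))) (at t)" if "t \<in> N" for t
    using field_vector_diff_chain_at[OF hvd[OF df[OF that]] holomorphic_derivI[OF Suc.prems(1) assms(2)]]
      that assms(4) unfolding o_def by auto
  show ?case
  proof (rule smk_SucI)
    show "\<And>t. t \<in> N \<Longrightarrow> (\<lambda>t. h (f t)) differentiable (at t)"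
      using hd differentiableI_vector by blast
    have sm: "smk k N (\<lambda>t. vd f t * deriv h (f t))"
      by (rule smk_mult[OF assms(1) smk_Suc_D(1)[OF Suc.prems(2)]
           Suc.IH[OF holomorphic_deriv[OF Suc.prems(1) assms(2)] smk_Suc_D(2)[OF Suc.prems(2)]]])
    show "smk k N (vd (\<lambda>t. h (f t)))"
      by (rule smk_local'[OF assms(1) sm]) (use vd_at[OF hd] in auto)
  qed
qed

lemma smooth_imp_smk:
  assumes "smooth_real_complex B"
  shows "smk k N B"
proof -
  obtain D where D: "D 0 = B" "\<And>n t. (D n has_vector_derivative D (Suc n) t) (at t)"
    using assms unfolding smooth_real_complex_def by blast
  have "D n = Dg n B" for n
  proof (induction n)
    case 0 then show ?case using D by simp
  next
    case (Suc n)
    show ?case unfolding Dg_Suc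
    proof
      fix t
      have "vd (D n) t = D (Suc n) t" by (rule vd_at[OF D(2)])
      then show "D (Suc n) t = vd (Dg n B) t" using Suc by simp
    qed
  qed
  note eq = this
  show ?thesis unfolding smk_def
  proof (intro allI impI ballI)
    fix j t
    have "(Dg j B has_vector_derivative D (Suc j) t) (at t)" using D(2)[of j t] eq[of j] by simp
    then show "Dg j B differentiable (at t)" by (rule differentiableI_vector)
  qed
qed

lemma smk_imp_smooth:
  assumes "\<And>k t. Dg k g differentiable (at t)"
  shows "smooth_real_complex g"
  unfolding smooth_real_complex_def
  by (rule exI[of _ "\<lambda>n. Dg n g"]) (auto simp: Dg_Suc intro: hvd assms)



lemma poly_hol: "poly P holomorphic_on A"
  using poly_holomorphic_on[of "\<lambda>z. z" A P] by simp

lemma poly_cont: "continuous_on A (poly (P::complex poly))"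
  using holomorphic_on_imp_continuous_on[OF poly_hol] .

lemma poly_cont_at: "continuous (at x) (poly (P::complex poly))"
  by (simp add: poly_DERIV[THEN DERIV_isCont])

lemma poly_deriv: "deriv (poly P) z = poly (pderiv P) (z::complex)"
  by (rule DERIV_imp_deriv) (rule poly_DERIV)

lemma poly_surj:
  fixes P :: "complex poly"
  assumes "degree P \<ge> 1"
  shows "\<exists>x. poly P x = s"
proof -
  have "coeff (P - [:s:]) (degree P) = coeff P (degree P)"
    using assms by (cases "degree P") auto
  also have "\<dots> \<noteq> 0" using assms by auto
  finally have "degree P \<le> degree (P - [:s:])" by (rule le_degree)
  then have "degree (P - [:s:]) \<noteq> 0" using assms by linarith
  then have "\<not> constant (poly (P - [:s:]))" by (simp add: constant_degree)
  then obtain x where "poly (P - [:s:]) x = 0" using fundamental_theorem_of_algebra by blast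
  then show ?thesis by auto
qed

lemma poly_fibre_finite:
  fixes P :: "complex poly"
  assumes "degree P \<ge> 1"
  shows "finite {x. poly P x = s}"
proof -
  have "P - [:s:] \<noteq> 0"
  proof
    assume "P - [:s:] = 0"
    then have "P = [:s:]" by simp
    then show False using assms by simp
  qed
  then have "finite {x. poly (P - [:s:]) x = 0}" by (rule poly_roots_finite)
  then show ?thesis by simp
qed

lemma poly_covering:
  fixes P :: "complex poly"
  assumes deg: "degree P \<ge> 1"
  defines "S \<equiv> - (poly P ` {z. poly (pderiv P) z = 0})"
  shows "covering_space (poly P -` S) (poly P) S"
proof -
  define p where "p = poly P"
  define Cc where "Cc = p -` S"
  have "pderiv P \<noteq> 0" using deg pderiv_eq_0_iff[of P] by auto
  then have "finite {z. poly (pderiv P) z = 0}" by (rule poly_roots_finite)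
  then have openS: "open S" unfolding S_def by (intro open_Compl finite_imp_closed finite_imageI)
  have openC: "open Cc" unfolding Cc_def p_def by (rule continuous_open_vimage[OF openS poly_cont_at])
  have contp: "continuous_on A p" for A unfolding p_def by (rule poly_cont)
  have holp: "p holomorphic_on A" for A unfolding p_def by (rule poly_hol)
  have "covering_space Cc p S"
  proof (rule covering_spaceI)
    show "continuous_on Cc p" by (rule contp)
    show "p ` Cc = S"
    proof
      show "p ` Cc \<subseteq> S" unfolding Cc_def by auto
      show "S \<subseteq> p ` Cc"
      proof
        fix s assume "s \<in> S"
        obtain x where "poly P x = s" using poly_surj[OF deg] by blast
        then show "s \<in> p ` Cc" using \<open>s \<in> S\<close> unfolding Cc_def p_def by auto
      qed
    qed
    fix y assume yS: "y \<in> S"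
    define Z where "Z = {x. p x = y}"
    have finZ: "finite Z" unfolding Z_def p_def using poly_fibre_finite[OF deg] .
    have neZ: "Z \<noteq> {}" unfolding Z_def p_def using poly_surj[OF deg] by blast
    have ZC: "Z \<subseteq> Cc" unfolding Z_def Cc_def using yS by auto
    have dnz: "deriv p z \<noteq> 0" if "z \<in> Z" for z
    proof
      assume "deriv p z = 0"
      then have "poly (pderiv P) z = 0" unfolding p_def poly_deriv .
      then have "y \<notin> S" using that unfolding Z_def S_def p_def by auto
      then show False using yS by simp
    qed
    have "\<exists>r>0. ball z r \<subseteq> Cc \<and> inj_on p (ball z r)" if "z \<in> Z" for z
      using has_complex_derivative_locally_injective[OF holp _ openC dnz[OF that]] ZC that
      by (metis subsetD)
    then obtain \<rho> where \<rho>: "\<And>z. z \<in> Z \<Longrightarrow> \<rho> z > 0 \<and> ball z (\<rho> z) \<subseteq> Cc \<and> inj_on p (ball z (\<rho> z))"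
      by metis
    define R2 where "R2 = (\<lambda>(z,w). dist z w / 2) ` {zw \<in> Z \<times> Z. fst zw \<noteq> snd zw}"
    have finR2: "finite R2" unfolding R2_def using finZ by auto
    define r where "r = Min (\<rho> ` Z \<union> R2)"
    have r_pos: "r > 0"
      unfolding r_def using finZ finR2 neZ \<rho> by (auto simp: Min_gr_iff R2_def)
    have r_le: "r \<le> \<rho> z" if "z \<in> Z" for z
      unfolding r_def using finZ finR2 that by (intro Min_le) auto
    have r_le2: "r \<le> dist z w / 2" if "z \<in> Z" "w \<in> Z" "z \<noteq> w" for z w
    proof -
      have "dist z w / 2 \<in> R2" unfolding R2_def using that by (auto intro!: image_eqI[of _ _ "(z,w)"])
      then show ?thesis unfolding r_def using finZ finR2 by (intro Min_le) auto
    qed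
    have disj: "ball z r \<inter> ball w r = {}" if "z \<in> Z" "w \<in> Z" "z \<noteq> w" for z w
    proof (rule ccontr)
      assume "ball z r \<inter> ball w r \<noteq> {}"
      then obtain x where "dist z x < r" "dist w x < r" by auto
      then have "dist z w < 2 * r" using dist_triangle[of z w x] dist_commute[of x w] by linarith
      then show False using r_le2[OF that] by simp
    qed
    have ballC: "ball z r \<subseteq> Cc" if "z \<in> Z" for z
      using \<rho>[OF that] r_le[OF that] by (meson order_trans subset_ball)
    have injb: "inj_on p (ball z r)" if "z \<in> Z" for z
      using \<rho>[OF that] r_le[OF that] by (meson inj_on_subset subset_ball)
    define K0 where "K0 = {x. cmod (p x - y) \<le> 1}"
    have "compact {z. (\<Sum>i\<le>degree P. coeff P i * z^i) \<in> cball y 1}"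
      using deg by (intro proper_map_polyfun_univ[where i="degree P"]) auto
    moreover have "{z. (\<Sum>i\<le>degree P. coeff P i * z^i) \<in> cball y 1} = K0"
      unfolding K0_def p_def by (auto simp: poly_altdef[symmetric] dist_norm norm_minus_commute)
    ultimately have cK0: "compact K0" by simp
    define K where "K = K0 - (\<Union>z\<in>Z. ball z r)"
    have cK: "compact K" unfolding K_def using cK0 by (intro compact_diff) auto
    obtain \<delta> where \<delta>: "\<delta> > 0" "\<And>x. x \<in> K \<Longrightarrow> \<delta> \<le> cmod (p x - y)"
    proof (cases "K = {}")
      case True then show ?thesis using that[of 1] by auto
    next
      case False
      have "continuous_on K (\<lambda>x. cmod (p x - y))"
        by (intro continuous_intros contp)
      then obtain x0 where x0: "x0 \<in> K" "\<And>x. x \<in> K \<Longrightarrow> cmod (p x0 - y) \<le> cmod (p x - y)"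
        using continuous_attains_inf[OF cK False] by blast
      have "p x0 \<noteq> y"
      proof
        assume "p x0 = y"
        then have "x0 \<in> Z" unfolding Z_def by simp
        then show False using x0(1) r_pos unfolding K_def by auto
      qed
      then show ?thesis using that[of "cmod (p x0 - y)"] x0 by auto
    qed
    have near: "\<exists>z\<in>Z. x \<in> ball z r" if "cmod (p x - y) < min 1 \<delta>" for x
    proof (rule ccontr)
      assume "\<not> ?thesis"
      then have "x \<in> K" unfolding K_def K0_def using that by auto
      then show False using \<delta>(2)[of x] that by auto
    qed
    have "\<exists>e>0. ball y e \<subseteq> p ` ball z r" if "z \<in> Z" for z
    proof -
      have "open (p ` ball z r)" using open_mapping_thm3[OF holp _ injb[OF that]] by simp
      moreover have "y \<in> p ` ball z r" using that r_pos unfolding Z_def by auto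
      ultimately show ?thesis using open_contains_ball by blast
    qed
    then obtain ef where ef: "\<And>z. z \<in> Z \<Longrightarrow> ef z > 0 \<and> ball y (ef z) \<subseteq> p ` ball z r"
      by metis
    obtain e0 where e0: "e0 > 0" "ball y e0 \<subseteq> S" using openS yS open_contains_ball by blast
    define \<epsilon> where "\<epsilon> = Min (ef ` Z \<union> {e0, min 1 \<delta>})"
    have \<epsilon>_pos: "\<epsilon> > 0" unfolding \<epsilon>_def using finZ ef e0 \<delta> by (auto simp: Min_gr_iff)
    have \<epsilon>_le: "\<epsilon> \<le> ef z" if "z \<in> Z" for z unfolding \<epsilon>_def using finZ that by (intro Min_le) auto
    have \<epsilon>_le0: "\<epsilon> \<le> e0" "\<epsilon> \<le> min 1 \<delta>" unfolding \<epsilon>_def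
      by (rule Min_le; use finZ in auto)+
    define T where "T = ball y \<epsilon>"
    define v where "v = (\<lambda>z. ball z r \<inter> p -` T) ` Z"
    have TS: "T \<subseteq> S" unfolding T_def using e0 \<epsilon>_le0 by (meson order_trans subset_ball)
    have openT: "open T" unfolding T_def by simp
    have openu: "open (ball z r \<inter> p -` T)" for z
      by (intro open_Int open_ball continuous_open_vimage[OF openT]) (simp add: p_def poly_cont_at)
    show "\<exists>T. y \<in> T \<and> openin (top_of_set S) T \<and>
             (\<exists>v. \<Union>v = Cc \<inter> p -` T \<and> (\<forall>u \<in> v. openin (top_of_set Cc) u) \<and>
             pairwise disjnt v \<and> (\<forall>u \<in> v. \<exists>q. homeomorphism u T p q))"
    proof (intro exI conjI)
      show "y \<in> T" unfolding T_def using \<epsilon>_pos by simp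
      show "openin (top_of_set S) T" by (rule open_subset[OF TS openT])
      show "\<Union>v = Cc \<inter> p -` T"
      proof
        show "\<Union>v \<subseteq> Cc \<inter> p -` T" unfolding v_def using ballC by auto
        show "Cc \<inter> p -` T \<subseteq> \<Union>v"
        proof
          fix x assume x: "x \<in> Cc \<inter> p -` T"
          then have "cmod (p x - y) < min 1 \<delta>"
            using \<epsilon>_le0 unfolding T_def by (auto simp: dist_norm norm_minus_commute)
          then obtain z where "z \<in> Z" "x \<in> ball z r" using near by blast
          then show "x \<in> \<Union>v" unfolding v_def using x by auto
        qed
      qed
      show "\<forall>u\<in>v. openin (top_of_set Cc) u"
        unfolding v_def using ballC openu by (auto intro!: open_subset)
      show "pairwise disjnt v"
        unfolding v_def pairwise_def disjnt_def using disj by fastforce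
      show "\<forall>u\<in>v. \<exists>q. homeomorphism u T p q"
      proof
        fix u assume "u \<in> v"
        then obtain z where z: "z \<in> Z" and u: "u = ball z r \<inter> p -` T" unfolding v_def by auto
        have inju: "inj_on p u" using injb[OF z] u by (auto intro: inj_on_subset)
        obtain q where q: "q holomorphic_on (p ` u)" "\<And>x. x \<in> u \<Longrightarrow> q (p x) = x"
          using holomorphic_has_inverse[OF holp openu[of z, folded u] inju] by metis
        have pu: "p ` u = T"
        proof
          show "p ` u \<subseteq> T" unfolding u by auto
          show "T \<subseteq> p ` u"
          proof
            fix w assume "w \<in> T"
            then have "w \<in> p ` ball z r" using ef[OF z] \<epsilon>_le[OF z] unfolding T_def
              by (meson subsetD subset_ball)
            then obtain x where "x \<in> ball z r" "w = p x" by auto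
            then show "w \<in> p ` u" unfolding u using \<open>w \<in> T\<close> by auto
          qed
        qed
        have "homeomorphism u T p q"
          unfolding homeomorphism_def
        proof (intro conjI ballI)
          show "q (p x) = x" if "x \<in> u" for x using q(2) that .
          show "p ` u = T" by (rule pu)
          show "continuous_on u p" by (rule contp)
          show "p (q w) = w" if wT: "w \<in> T" for w
          proof -
            obtain x where "x \<in> u" "w = p x" using pu wT by auto
            then show ?thesis using q(2) by simp
          qed
          show "q ` T = u" unfolding pu[symmetric] image_image using q(2) by simp
          show "continuous_on T q" using q(1) pu holomorphic_on_imp_continuous_on by simp
        qed
        then show "\<exists>q. homeomorphism u T p q" by blast
      qed
    qed
  qed
  then show ?thesis unfolding Cc_def p_def .
qed



theorem lemma19:
  fixes P :: "complex poly" and B :: "real \<Rightarrow> complex"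
  assumes "degree P \<ge> 1"
    and "smooth_real_complex B"
    and "\<exists>K c. compact K \<and> (\<forall>t. t \<notin> K \<longrightarrow> B t = c)"
    and "range B \<inter> poly P ` {z. poly (pderiv P) z = 0} = {}"
  shows "\<exists>g. smooth_real_complex g \<and> (\<forall>t. poly P (g t) = B t)"
proof -
  define S where "S = - (poly P ` {z. poly (pderiv P) z = 0})"
  define Cc where "Cc = poly P -` S"
  have cov: "covering_space Cc (poly P) S"
    unfolding Cc_def S_def by (rule poly_covering[OF assms(1)])
  have openS: "open S"
  proof -
    have "pderiv P \<noteq> 0" using assms(1) pderiv_eq_0_iff[of P] by auto
    then have "finite {z. poly (pderiv P) z = 0}" by (rule poly_roots_finite)
    then show ?thesis unfolding S_def by (intro open_Compl finite_imp_closed finite_imageI)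
  qed
  have openC: "open Cc" unfolding Cc_def by (rule continuous_open_vimage[OF openS poly_cont_at])
  have smB: "\<And>k N. smk k N B" using smooth_imp_smk[OF assms(2)] .
  have contB: "continuous_on UNIV B"
  proof (rule continuous_at_imp_continuous_on, intro ballI)
    fix t :: real
    have "B differentiable (at t)" using smB[of 0 UNIV] unfolding smk_def by simp
    then show "isCont B t" by (rule differentiable_imp_continuous_within)
  qed
  have BS: "B \<in> UNIV \<rightarrow> S" using assms(4) unfolding S_def by auto
  obtain g where contg: "continuous_on UNIV g" and gC: "g \<in> UNIV \<rightarrow> Cc"
    and pg: "\<And>t. t \<in> UNIV \<Longrightarrow> poly P (g t) = B t"
    using covering_space_lift[OF cov convex_imp_simply_connected[OF convex_UNIV]
        convex_imp_locally_path_connected[OF convex_UNIV] contB BS] by metis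
  have "Dg k g differentiable (at t0)" for k t0
  proof -
    have "g t0 \<in> Cc" using gC by auto
    then obtain T u q where T: "g t0 \<in> T" "openin (top_of_set Cc) T"
      and u: "poly P (g t0) \<in> u" "openin (top_of_set S) u" and hom: "homeomorphism T u (poly P) q"
      using covering_space_local_homeomorphism[OF cov] by metis
    have openT: "open T" using openin_open_trans[OF T(2) openC] .
    have openu: "open u" using openin_open_trans[OF u(2) openS] .
    have injT: "inj_on (poly P) T" using hom unfolding homeomorphism_def by (metis inj_on_inverseI)
    have PT: "poly P ` T = u" using hom unfolding homeomorphism_def by simp
    obtain q' where q': "q' holomorphic_on (poly P ` T)" "\<And>z. z \<in> T \<Longrightarrow> q' (poly P z) = z"
      using holomorphic_has_inverse[OF poly_hol openT injT] by metis
    define N where "N = B -` u \<inter> g -` T"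
    have openN: "open N" unfolding N_def
      by (intro open_Int continuous_open_vimage openu openT)
         (use contB contg continuous_on_eq_continuous_at in auto)
    have t0N: "t0 \<in> N" unfolding N_def using T(1) u(1) pg by auto
    have "smk k N (\<lambda>t. q' (B t))"
      by (rule smk_comp[OF openN openu q'(1)[unfolded PT] _ smB]) (auto simp: N_def)
    moreover have eqN: "\<forall>t\<in>N. q' (B t) = g t"
    proof
      fix t assume "t \<in> N"
      then have "g t \<in> T" by (simp add: N_def)
      then have "q' (poly P (g t)) = g t" by (rule q'(2))
      then show "q' (B t) = g t" using pg[of t] by simp
    qed
    ultimately have "smk k N g" by (rule smk_local'[OF openN])
    then show ?thesis using t0N unfolding smk_def by auto
  qed
  then have "smooth_real_complex g" by (rule smk_imp_smooth)
  then show ?thesis using pg by blast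
qed

end
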